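(* Let $(G,H)$ be a strictly balanced rooted graph. Then: (i) There is a constant $\beta>0$ such that, for all $p=p(n)\in[0,1]$ with $p=O(n^{-1/d(G,H)+\beta})$, $$n^{\beta}\cdot\max_{G\subsetneq J\subsetneq H} n^{v_H-v_J}p^{e_H-e_J}\to 0 \quad (n\to\infty).$$ (ii) The graph $H-V(G)$, obtained from $H$ by deleting the vertices of $G$, is connected.
   Context: For a graph $F$, $v_F,e_F$ are its numbers of vertices and edges. A rooted graph $(G,H)$ consists of a graph $H$ and an induced subgraph $G\subseteq H$ (the root vertices), with $e_H>e_G$. For $G\subsetneq J\subseteq H$, $d(G,J)=(e_J-e_G)/(v_J-v_G)$. $(G,H)$ is strictly balanced if $d(G,J)<d(G,H)$ for all subgraphs $J$ with $G\subsetneq J\subsetneq H$. *)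

theory Defs
  imports Complex_Main "HOL-Library.Landau_Symbols"
begin

type_synonym 'a graph = "'a set \<times> 'a set set"

definition graph :: "'a graph \<Rightarrow> bool" where
  "graph F \<longleftrightarrow> finite (fst F) \<and>
     (\<forall>e\<in>snd F. \<exists>x y. x \<noteq> y \<and> x \<in> fst F \<and> y \<in> fst F \<and> e = {x, y})"

definition v_of :: "'a graph \<Rightarrow> nat" where
  "v_of F = card (fst F)"

definition e_of :: "'a graph \<Rightarrow> nat" where
  "e_of F = card (snd F)"

definition subgraph :: "'a graph \<Rightarrow> 'a graph \<Rightarrow> bool" where
  "subgraph J H \<longleftrightarrow> graph J \<and> graph H \<and> fst J \<subseteq> fst H \<and> snd J \<subseteq> snd H"

definition induced_subgraph :: "'a graph \<Rightarrow> 'a graph \<Rightarrow> bool" where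
  "induced_subgraph G H \<longleftrightarrow> subgraph G H \<and> snd G = {e \<in> snd H. e \<subseteq> fst G}"

definition rooted_graph :: "'a graph \<Rightarrow> 'a graph \<Rightarrow> bool" where
  "rooted_graph G H \<longleftrightarrow> graph H \<and> induced_subgraph G H \<and> e_of H > e_of G"

definition dens :: "'a graph \<Rightarrow> 'a graph \<Rightarrow> real" where
  "dens G J = (real (e_of J) - real (e_of G)) / (real (v_of J) - real (v_of G))"

definition between :: "'a graph \<Rightarrow> 'a graph \<Rightarrow> 'a graph set" where
  "between G H = {J. subgraph G J \<and> subgraph J H \<and> J \<noteq> G \<and> J \<noteq> H}"

definition strictly_balanced :: "'a graph \<Rightarrow> 'a graph \<Rightarrow> bool" where
  "strictly_balanced G H \<longleftrightarrow> rooted_graph G H \<and>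
     (\<forall>J\<in>between G H. dens G J < dens G H)"

definition max_term :: "'a graph \<Rightarrow> 'a graph \<Rightarrow> nat \<Rightarrow> real \<Rightarrow> real" where
  "max_term G H n p =
     (if between G H = {} then 0
      else Max ((\<lambda>J. real n ^ (v_of H - v_of J) * p ^ (e_of H - e_of J)) ` between G H))"

definition delete_vertices :: "'a graph \<Rightarrow> 'a set \<Rightarrow> 'a graph" where
  "delete_vertices H S = (fst H - S, {e \<in> snd H. e \<inter> S = {}})"

definition adj :: "'a graph \<Rightarrow> ('a \<times> 'a) set" where
  "adj F = {(x, y). {x, y} \<in> snd F}"

definition connected_graph :: "'a graph \<Rightarrow> bool" where
  "connected_graph F \<longleftrightarrow> (\<forall>x\<in>fst F. \<forall>y\<in>fst F. (x, y) \<in> (adj F)\<^sup>*)"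

end

theory Submission
  imports Defs
begin


lemma term_lim:
  fixes p :: "nat \<Rightarrow> real" and a b :: nat and x \<beta> :: real
  assumes nn: "\<forall>n. 0 \<le> p n" and O: "p \<in> O(\<lambda>n. real n powr x)"
    and ex: "real a + \<beta> + real b * x < 0"
  shows "(\<lambda>n. real n powr \<beta> * (real n ^ a * p n ^ b)) \<longlonglongrightarrow> 0"
proof -
  obtain c where c: "c > 0" "eventually (\<lambda>n. norm (p n) \<le> c * norm (real n powr x)) sequentially"
    using O by (elim landau_o.bigE)
  have ev: "eventually (\<lambda>n. real n powr \<beta> * (real n ^ a * p n ^ b) \<le> c ^ b * real n powr (real a + \<beta> + real b * x)) sequentially"
    using c(2) eventually_ge_at_top[of "1::nat"]
  proof eventually_elim
    case (elim n)
    have np: "real n > 0" using elim by simp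
    have pn: "p n \<le> c * real n powr x" using elim nn by simp
    have "p n ^ b \<le> (c * real n powr x) ^ b" using pn nn by (simp add: power_mono)
    also have "\<dots> = c ^ b * real n powr (real b * x)"
      using np by (simp add: power_mult_distrib powr_power)
    finally have 1: "p n ^ b \<le> c ^ b * real n powr (real b * x)" .
    have "real n powr \<beta> * (real n ^ a * p n ^ b) \<le> real n powr \<beta> * (real n ^ a * (c ^ b * real n powr (real b * x)))"
      using 1 np by (intro mult_left_mono) auto
    also have "\<dots> = c ^ b * (real n powr \<beta> * real n powr (real a) * real n powr (real b * x))"
      using np by (simp add: powr_realpow)
    also have "\<dots> = c ^ b * real n powr (real a + \<beta> + real b * x)"
      using np by (simp add: powr_add algebra_simps)
    finally show ?case .
  qed
  have ev0: "eventually (\<lambda>n. 0 \<le> real n powr \<beta> * (real n ^ a * p n ^ b)) sequentially"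
    using nn by (intro always_eventually) auto
  have lim: "(\<lambda>n. c ^ b * real n powr (real a + \<beta> + real b * x)) \<longlonglongrightarrow> 0"
    by (intro tendsto_mult_right_zero tendsto_neg_powr[OF ex] filterlim_real_sequentially)
  show ?thesis by (rule tendsto_sandwich[OF ev0 ev tendsto_const lim])
qed

lemma finite_small:
  fixes P :: "'b \<Rightarrow> real \<Rightarrow> bool"
  assumes "finite S" "\<forall>J\<in>S. \<exists>\<beta>>0. \<forall>\<beta>'. 0 < \<beta>' \<and> \<beta>' \<le> \<beta> \<longrightarrow> P J \<beta>'"
  shows "\<exists>\<beta>>0. \<forall>\<beta>'. 0 < \<beta>' \<and> \<beta>' \<le> \<beta> \<longrightarrow> (\<forall>J\<in>S. P J \<beta>')"
  using assms
proof (induction S rule: finite_induct)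
  case empty
  then show ?case by (intro exI[of _ 1]) auto
next
  case (insert x F)
  then obtain b1 where b1: "b1 > 0" "\<forall>\<beta>'. 0 < \<beta>' \<and> \<beta>' \<le> b1 \<longrightarrow> (\<forall>J\<in>F. P J \<beta>')" by auto
  from insert obtain b2 where b2: "b2 > 0" "\<forall>\<beta>'. 0 < \<beta>' \<and> \<beta>' \<le> b2 \<longrightarrow> P x \<beta>'" by auto
  show ?case using b1 b2 by (intro exI[of _ "min b1 b2"]) auto
qed



lemma graph_fin: "graph H \<Longrightarrow> finite (fst H) \<and> finite (snd H)"
proof -
  assume g: "graph H"
  have "snd H \<subseteq> Pow (fst H)" using g unfolding graph_def by fastforce
  then show ?thesis using g unfolding graph_def by (meson finite_Pow_iff finite_subset)
qed

lemma graph_edge_sub: "graph H \<Longrightarrow> e \<in> snd H \<Longrightarrow> e \<subseteq> fst H"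
  unfolding graph_def by fastforce

lemma dens_lt:
  assumes "v_of G < v_of J" "dens G J < d"
  shows "real (e_of J) - real (e_of G) < d * (real (v_of J) - real (v_of G))"
proof -
  have "real (v_of J) - real (v_of G) > 0" using assms by simp
  then show ?thesis using assms(2) unfolding dens_def by (simp add: pos_divide_less_eq mult.commute)
qed

lemma rooted_basic:
  assumes "rooted_graph G H"
  shows "v_of G < v_of H" "dens G H > 0"
    "real (e_of H) - real (e_of G) = dens G H * (real (v_of H) - real (v_of G))"
proof -
  have gH: "graph H" and ind: "induced_subgraph G H" and e: "e_of H > e_of G"
    using assms unfolding rooted_graph_def by auto
  have sub: "fst G \<subseteq> fst H" "snd G \<subseteq> snd H" and gG: "graph G"
    using ind unfolding induced_subgraph_def subgraph_def by auto
  have fin: "finite (fst H)" "finite (snd H)" using graph_fin[OF gH] by auto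
  have le: "v_of G \<le> v_of H" unfolding v_of_def using sub fin by (simp add: card_mono)
  show lt: "v_of G < v_of H"
  proof (rule ccontr)
    assume "\<not> v_of G < v_of H"
    then have "card (fst G) = card (fst H)" using le unfolding v_of_def by simp
    then have "fst G = fst H" using sub fin card_subset_eq by blast
    then have "snd G = snd H" using ind graph_edge_sub[OF gH] unfolding induced_subgraph_def by auto
    then show False using e unfolding e_of_def by simp
  qed
  show "dens G H > 0" unfolding dens_def using lt e by simp
  show "real (e_of H) - real (e_of G) = dens G H * (real (v_of H) - real (v_of G))"
    unfolding dens_def using lt by simp
qed

lemma between_facts:
  assumes "rooted_graph G H" "J \<in> between G H"
  shows "v_of G < v_of J" "v_of J \<le> v_of H" "e_of J \<le> e_of H"
proof -
  have gH: "graph H" and ind: "induced_subgraph G H"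
    using assms unfolding rooted_graph_def by auto
  have sGJ: "subgraph G J" and sJH: "subgraph J H" and ne: "J \<noteq> G"
    using assms(2) unfolding between_def by auto
  have fin: "finite (fst H)" "finite (snd H)" using graph_fin[OF gH] by auto
  have gJ: "graph J" using sJH unfolding subgraph_def by auto
  have finJ: "finite (fst J)" using graph_fin[OF gJ] by auto
  show "v_of J \<le> v_of H" "e_of J \<le> e_of H" unfolding v_of_def e_of_def
    using sJH fin unfolding subgraph_def by (auto intro: card_mono)
  have le: "v_of G \<le> v_of J" unfolding v_of_def using sGJ finJ unfolding subgraph_def by (auto intro: card_mono)
  show "v_of G < v_of J"
  proof (rule ccontr)
    assume "\<not> v_of G < v_of J"
    then have "card (fst G) = card (fst J)" using le unfolding v_of_def by simp
    then have fe: "fst G = fst J" using sGJ finJ card_subset_eq unfolding subgraph_def by blast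
    have "snd J \<subseteq> snd G"
      using ind sJH graph_edge_sub[OF gJ] fe unfolding induced_subgraph_def subgraph_def by auto
    then have "snd G = snd J" using sGJ unfolding subgraph_def by auto
    then have "J = G" using fe by (simp add: prod_eq_iff)
    then show False using ne by simp
  qed
qed

lemma finite_between:
  assumes "graph H" shows "finite (between G H)"
proof -
  have "between G H \<subseteq> Pow (fst H) \<times> Pow (snd H)"
    unfolding between_def subgraph_def by (auto simp: mem_Times_iff)
  then show ?thesis using graph_fin[OF assms] by (meson finite_Pow_iff finite_SigmaI finite_subset)
qed



lemma conn:
  assumes sb: "strictly_balanced G H"
  shows "connected_graph (delete_vertices H (fst G))"
proof -
  have rg: "rooted_graph G H" and sbJ: "\<forall>J\<in>between G H. dens G J < dens G H"
    using sb unfolding strictly_balanced_def by auto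
  have gH: "graph H" and ind: "induced_subgraph G H"
    using rg unfolding rooted_graph_def by auto
  have SV: "fst G \<subseteq> fst H" and gG: "graph G" and sndG: "snd G = {e \<in> snd H. e \<subseteq> fst G}"
    using ind unfolding induced_subgraph_def subgraph_def by auto
  have fin: "finite (fst H)" "finite (snd H)" using graph_fin[OF gH] by auto
  define V where "V = fst H"
  define S where "S = fst G"
  define E where "E = snd H"
  define D where "D = delete_vertices H (fst G)"
  define R where "R = (adj D)\<^sup>*"
  show ?thesis unfolding connected_graph_def
  proof (intro ballI, rule ccontr)
    fix x y assume xD: "x \<in> fst (delete_vertices H (fst G))" and yD: "y \<in> fst (delete_vertices H (fst G))"
      and nR: "(x, y) \<notin> (adj (delete_vertices H (fst G)))\<^sup>*"
    have xV: "x \<in> V" "x \<notin> S" and yV: "y \<in> V" "y \<notin> S"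
      using xD yD unfolding delete_vertices_def V_def S_def by auto
    have nR': "(x, y) \<notin> R" using nR unfolding R_def D_def .
    define A where "A = {z \<in> V - S. (x, z) \<in> R}"
    define B where "B = V - S - A"
    have xA: "x \<in> A" unfolding A_def R_def using xV by auto
    have yB: "y \<in> B" "y \<notin> A" unfolding B_def A_def using yV nR' by auto
    have adjD: "(u, w) \<in> adj D" if "{u, w} \<in> E" "u \<notin> S" "w \<notin> S" for u w
      using that unfolding adj_def D_def delete_vertices_def E_def S_def by auto
    have key: "e \<subseteq> S \<union> A \<or> e \<subseteq> S \<union> B" if eE: "e \<in> E" for e
    proof -
      obtain u w where uw: "u \<noteq> w" "u \<in> V" "w \<in> V" "e = {u, w}"
        using eE gH unfolding graph_def E_def V_def by blast
      have c1: "\<not> (u \<in> A \<and> w \<in> B)"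
      proof
        assume h: "u \<in> A \<and> w \<in> B"
        then have "u \<notin> S" "w \<notin> S" unfolding A_def B_def by auto
        then have "(u, w) \<in> adj D" using adjD eE uw by auto
        then have "(x, w) \<in> R" using h unfolding A_def R_def by (auto intro: rtrancl_into_rtrancl)
        then show False using h \<open>w \<notin> S\<close> uw unfolding A_def B_def by auto
      qed
      have c2: "\<not> (w \<in> A \<and> u \<in> B)"
      proof
        assume h: "w \<in> A \<and> u \<in> B"
        then have "u \<notin> S" "w \<notin> S" unfolding A_def B_def by auto
        then have "(w, u) \<in> adj D" using adjD eE uw by (auto simp: insert_commute)
        then have "(x, u) \<in> R" using h unfolding A_def R_def by (auto intro: rtrancl_into_rtrancl)
        then show False using h \<open>u \<notin> S\<close> uw unfolding A_def B_def by auto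
      qed
      have "u \<in> S \<union> A \<union> B" "w \<in> S \<union> A \<union> B" using uw unfolding B_def by auto
      then show ?thesis using c1 c2 uw by auto
    qed
    define JA where "JA = (S \<union> A, {e \<in> E. e \<subseteq> S \<union> A})"
    define JB where "JB = (S \<union> B, {e \<in> E. e \<subseteq> S \<union> B})"
    have AV: "A \<subseteq> V" "B \<subseteq> V" "A \<inter> B = {}" "S \<union> A \<union> B = V" "A \<inter> S = {}" "B \<inter> S = {}"
      unfolding A_def B_def using SV unfolding S_def V_def by auto
    have gJ: "graph (T, {e \<in> E. e \<subseteq> T})" if "T \<subseteq> V" for T
    proof -
      have "finite T" using that fin unfolding V_def by (auto intro: finite_subset)
      moreover have "\<exists>u w. u \<noteq> w \<and> u \<in> T \<and> w \<in> T \<and> e = {u, w}" if "e \<in> E" "e \<subseteq> T" for e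
      proof -
        obtain u w where "u \<noteq> w" "e = {u, w}" using gH \<open>e \<in> E\<close> unfolding graph_def E_def by blast
        then show ?thesis using \<open>e \<subseteq> T\<close> by auto
      qed
      ultimately show ?thesis unfolding graph_def by auto
    qed
    have sub1: "subgraph G (T, {e \<in> E. e \<subseteq> T})" "subgraph (T, {e \<in> E. e \<subseteq> T}) H"
      if "S \<subseteq> T" "T \<subseteq> V" for T
      using gJ[OF that(2)] gG gH that SV sndG unfolding subgraph_def S_def E_def V_def by auto
    have JAb: "JA \<in> between G H"
    proof -
      have "JA \<noteq> G"
      proof
        assume "JA = G" then have "fst JA = fst G" by simp
        then show False using xA xV unfolding JA_def S_def by auto
      qed
      moreover have "JA \<noteq> H"
      proof
        assume "JA = H" then have "fst JA = fst H" by simp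
        then show False using yV yB AV unfolding JA_def V_def by auto
      qed
      ultimately show ?thesis unfolding between_def JA_def using sub1[of "S \<union> A"] AV by auto
    qed
    have JBb: "JB \<in> between G H"
    proof -
      have "JB \<noteq> G"
      proof
        assume "JB = G" then have "fst JB = fst G" by simp
        then show False using yB yV unfolding JB_def S_def by auto
      qed
      moreover have "JB \<noteq> H"
      proof
        assume "JB = H" then have "fst JB = fst H" by simp
        then show False using xV xA AV unfolding JB_def V_def by auto
      qed
      ultimately show ?thesis unfolding between_def JB_def using sub1[of "S \<union> B"] AV by auto
    qed
    have finE: "finite E" "finite V" using fin unfolding E_def V_def by auto
    have eU: "{e \<in> E. e \<subseteq> S \<union> A} \<union> {e \<in> E. e \<subseteq> S \<union> B} = E" using key by auto
    have eI: "{e \<in> E. e \<subseteq> S \<union> A} \<inter> {e \<in> E. e \<subseteq> S \<union> B} = snd G"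
      using sndG AV unfolding E_def S_def by auto
    have ecount: "e_of JA + e_of JB = e_of H + e_of G"
      unfolding e_of_def JA_def JB_def using card_Un_Int[of "{e \<in> E. e \<subseteq> S \<union> A}" "{e \<in> E. e \<subseteq> S \<union> B}"] finE eU eI
      unfolding E_def by auto
    have vcount: "v_of JA + v_of JB = v_of H + v_of G"
    proof -
      have "(S \<union> A) \<union> (S \<union> B) = V" "(S \<union> A) \<inter> (S \<union> B) = S" using AV by auto
      moreover have "finite (S \<union> A)" "finite (S \<union> B)" using AV finE SV unfolding S_def V_def
        by (auto intro: finite_subset)
      ultimately show ?thesis unfolding v_of_def JA_def JB_def using card_Un_Int[of "S \<union> A" "S \<union> B"]
        unfolding V_def S_def by auto
    qed
    let ?d = "dens G H"
    have iA: "real (e_of JA) - real (e_of G) < ?d * (real (v_of JA) - real (v_of G))"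
      using dens_lt between_facts[OF rg JAb] sbJ JAb by blast
    have iB: "real (e_of JB) - real (e_of G) < ?d * (real (v_of JB) - real (v_of G))"
      using dens_lt between_facts[OF rg JBb] sbJ JBb by blast
    have eH: "real (e_of H) - real (e_of G) = ?d * (real (v_of H) - real (v_of G))"
      using rooted_basic[OF rg] by simp
    have ec: "real (e_of JA) + real (e_of JB) = real (e_of H) + real (e_of G)"
      using ecount by (metis of_nat_add)
    have vc: "real (v_of JA) + real (v_of JB) = real (v_of H) + real (v_of G)"
      using vcount by (metis of_nat_add)
    have "?d * (real (v_of JA) - real (v_of G)) + ?d * (real (v_of JB) - real (v_of G))
          = ?d * (real (v_of H) - real (v_of G))" proof -
      have s: "(real (v_of JA) - real (v_of G)) + (real (v_of JB) - real (v_of G)) = real (v_of H) - real (v_of G)"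
        using vc by linarith
      show ?thesis by (subst s[symmetric]) (simp only: distrib_left)
    qed
    then show False using iA iB eH ec by linarith
  qed
qed



theorem lemma11:
  fixes G H :: "'a graph"
  assumes "strictly_balanced G H"
  shows "(\<exists>\<beta>::real. \<beta> > 0 \<and>
           (\<forall>p :: nat \<Rightarrow> real.
              (\<forall>n. 0 \<le> p n \<and> p n \<le> 1) \<and>
              p \<in> O(\<lambda>n. real n powr (- 1 / dens G H + \<beta>)) \<longrightarrow>
              ((\<lambda>n. real n powr \<beta> * max_term G H n (p n)) \<longlonglongrightarrow> 0)))
         \<and> connected_graph (delete_vertices H (fst G))"
proof
  have rg: "rooted_graph G H" and sbJ: "\<forall>J\<in>between G H. dens G J < dens G H"
    using assms unfolding strictly_balanced_def by auto
  have gH: "graph H" using rg unfolding rooted_graph_def by auto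
  define d where "d = dens G H"
  have dpos: "d > 0" and eH: "real (e_of H) - real (e_of G) = d * (real (v_of H) - real (v_of G))"
    using rooted_basic[OF rg] unfolding d_def by auto
  define a where "a = (\<lambda>J::'a graph. v_of H - v_of J)"
  define b where "b = (\<lambda>J::'a graph. e_of H - e_of J)"
  have keyJ: "real (b J) > d * real (a J)" if J: "J \<in> between G H" for J
  proof -
    note bf = between_facts[OF rg J]
    have "real (e_of J) - real (e_of G) < d * (real (v_of J) - real (v_of G))"
      using dens_lt[OF bf(1)] sbJ J unfolding d_def by blast
    moreover have "real (a J) = real (v_of H) - real (v_of J)" "real (b J) = real (e_of H) - real (e_of J)"
      unfolding a_def b_def using bf by auto
    moreover have "d * real (a J) = d * real (v_of H) - d * real (v_of J)"
      unfolding a_def using bf by (simp add: right_diff_distrib of_nat_diff)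
    moreover have "d * (real (v_of J) - real (v_of G)) = d * real (v_of J) - d * real (v_of G)"
      "d * (real (v_of H) - real (v_of G)) = d * real (v_of H) - d * real (v_of G)"
      by (simp_all add: right_diff_distrib)
    ultimately show ?thesis using eH by linarith
  qed
  have smallJ: "\<exists>\<beta>>0. \<forall>\<beta>'. 0 < \<beta>' \<and> \<beta>' \<le> \<beta> \<longrightarrow> real (a J) + \<beta>' + real (b J) * (- 1 / d + \<beta>') < 0"
    if J: "J \<in> between G H" for J
  proof -
    define g where "g = real (b J) / d - real (a J)"
    have gpos: "g > 0" using keyJ[OF J] dpos unfolding g_def by (simp add: field_simps)
    define \<beta>0 where "\<beta>0 = g / (2 * (1 + real (b J)))"
    have "\<beta>0 > 0" unfolding \<beta>0_def using gpos by simp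
    moreover have "real (a J) + \<beta>' + real (b J) * (- 1 / d + \<beta>') < 0" if "0 < \<beta>'" "\<beta>' \<le> \<beta>0" for \<beta>'
    proof -
      have "\<beta>' * (1 + real (b J)) \<le> \<beta>0 * (1 + real (b J))" using that by (intro mult_right_mono) auto
      also have "\<dots> = g / 2" unfolding \<beta>0_def by (simp add: field_simps)
      finally have h: "\<beta>' * (1 + real (b J)) \<le> g / 2" .
      have "real (a J) + \<beta>' + real (b J) * (- 1 / d + \<beta>') = \<beta>' * (1 + real (b J)) - g"
        unfolding g_def by (simp add: algebra_simps)
      then show ?thesis using h gpos by linarith
    qed
    ultimately show ?thesis by blast
  qed
  have finB: "finite (between G H)" using finite_between[OF gH] .
  obtain \<beta> where bpos: "\<beta> > 0" and bJ: "\<forall>J\<in>between G H. real (a J) + \<beta> + real (b J) * (- 1 / d + \<beta>) < 0"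
    using finite_small[OF finB, of "\<lambda>J \<beta>'. real (a J) + \<beta>' + real (b J) * (- 1 / d + \<beta>') < 0"] smallJ
    by (metis order_refl)
  show "\<exists>\<beta>::real. \<beta> > 0 \<and>
           (\<forall>p :: nat \<Rightarrow> real.
              (\<forall>n. 0 \<le> p n \<and> p n \<le> 1) \<and>
              p \<in> O(\<lambda>n. real n powr (- 1 / dens G H + \<beta>)) \<longrightarrow>
              ((\<lambda>n. real n powr \<beta> * max_term G H n (p n)) \<longlonglongrightarrow> 0))"
  proof (intro exI[of _ \<beta>] conjI allI impI bpos)
    fix p :: "nat \<Rightarrow> real"
    assume pa: "(\<forall>n. 0 \<le> p n \<and> p n \<le> 1) \<and> p \<in> O(\<lambda>n. real n powr (- 1 / dens G H + \<beta>))"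
    have nn: "\<forall>n. 0 \<le> p n" and O: "p \<in> O(\<lambda>n. real n powr (- 1 / d + \<beta>))"
      using pa unfolding d_def by auto
    define t where "t = (\<lambda>J n. real n ^ a J * p n ^ b J)"
    have tnn: "t J n \<ge> 0" for J n unfolding t_def using nn by simp
    have lims: "(\<lambda>n. real n powr \<beta> * t J n) \<longlonglongrightarrow> 0" if "J \<in> between G H" for J
      unfolding t_def using term_lim[OF nn O] bJ that by blast
    have sumlim: "(\<lambda>n. \<Sum>J\<in>between G H. real n powr \<beta> * t J n) \<longlonglongrightarrow> 0"
      using lims by (intro tendsto_null_sum) auto
    have mt: "max_term G H n (p n) = (if between G H = {} then 0 else Max ((\<lambda>J. t J n) ` between G H))" for n
      unfolding max_term_def t_def a_def b_def by simp
    have bnd: "0 \<le> max_term G H n (p n) \<and> max_term G H n (p n) \<le> (\<Sum>J\<in>between G H. t J n)" for n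
    proof (cases "between G H = {}")
      case True then show ?thesis using mt by simp
    next
      case False
      obtain J0 where J0: "J0 \<in> between G H" "Max ((\<lambda>J. t J n) ` between G H) = t J0 n"
      proof -
        have "Max ((\<lambda>J. t J n) ` between G H) \<in> (\<lambda>J. t J n) ` between G H"
          using finB False by (intro Max_in) auto
        then show ?thesis using that by blast
      qed
      have "t J0 n \<le> (\<Sum>J\<in>between G H. t J n)"
        using J0 finB tnn by (intro member_le_sum) auto
      then show ?thesis using mt False J0 tnn by simp
    qed
    have ev0: "eventually (\<lambda>n. 0 \<le> real n powr \<beta> * max_term G H n (p n)) sequentially"
      using bnd by (intro always_eventually) auto
    have ev1: "eventually (\<lambda>n. real n powr \<beta> * max_term G H n (p n) \<le> (\<Sum>J\<in>between G H. real n powr \<beta> * t J n)) sequentially"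
      using bnd by (intro always_eventually allI) (simp add: sum_distrib_left[symmetric] mult_left_mono)
    show "(\<lambda>n. real n powr \<beta> * max_term G H n (p n)) \<longlonglongrightarrow> 0"
      by (rule tendsto_sandwich[OF ev0 ev1 tendsto_const sumlim])
  qed
next
  show "connected_graph (delete_vertices H (fst G))" using conn[OF assms] .
qed

end
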